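(* Let $N\ge3$. For $p>p_{\rm S}=\frac{N+2}{N-2}$ let $\underline\Theta=\underline\Theta(p)\in(0,\pi)$ be the number such that problem (P$_\Theta$) has no regular solution for $\Theta\in(0,\underline\Theta)$ and has a regular solution for every $\Theta\in(\underline\Theta,\pi)$, and let $\Theta^*=\Theta^*(p)$ be as in the context. Then $\underline\Theta(p)\to\pi$ as $p\to\infty$; since $\underline\Theta\le\Theta^*$, also $\Theta^*(p)\to\pi$ as $p\to\infty$. Moreover, when $N=3$, for every $p\ge5$ problem (P$_\Theta$) has no regular solution for $\Theta\in(0,\pi-\arcsin\frac{4}{p-1}]$; in particular $\underline\Theta\ge\pi-\arcsin\frac{4}{p-1}$ for $p>5$.
   Context: For $\Theta\in(0,\pi)$, problem (P$_\Theta$) is: $U''+(N-1)\frac{\cos\theta}{\sin\theta}U'+U^p=0$ on $(0,\Theta)$, $U(\Theta)=0$, $U>0$ on $[0,\Theta)$; a regular solution is one with $U\in C^2[0,\Theta]$, $U'(0)=0$. $\Theta^*\in(0,\pi)$ is the first positive zero of the unique solution $U^*$ of $U''+(N-1)\frac{\cos\theta}{\sin\theta}U'+|U|^{p-1}U=0$ with $U^*(\theta)=a(\cos\frac\theta2)^{-(N-2)}(2\tan\frac\theta2)^{-\mu}(1+o(1))$ as $\theta\downarrow0$, $\mu=\frac{2}{p-1}$, $a=\{\mu(N-2-\mu)\}^{\mu/2}$. *)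

theory Defs
  imports "HOL-Analysis.Analysis" "HOL-Library.Landau_Symbols"
begin

definition pS :: "real \<Rightarrow> real" where
  "pS N = (N + 2) / (N - 2)"

definition regular_solution :: "real \<Rightarrow> real \<Rightarrow> real \<Rightarrow> (real \<Rightarrow> real) \<Rightarrow> bool" where
  "regular_solution N p \<Theta> U \<longleftrightarrow>
     (\<exists>U1 U2.
        (\<forall>\<theta>\<in>{0..\<Theta>}. (U has_real_derivative U1 \<theta>) (at \<theta> within {0..\<Theta>}) \<and>
                          (U1 has_real_derivative U2 \<theta>) (at \<theta> within {0..\<Theta>})) \<and>
        continuous_on {0..\<Theta>} U2 \<and>
        U1 0 = 0 \<and>
        (\<forall>\<theta>\<in>{0<..<\<Theta>}. U2 \<theta> + (N - 1) * (cos \<theta> / sin \<theta>) * U1 \<theta> + U \<theta> powr p = 0)) \<and>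
     U \<Theta> = 0 \<and> (\<forall>\<theta>\<in>{0..<\<Theta>}. U \<theta> > 0)"

definition singular_solution :: "real \<Rightarrow> real \<Rightarrow> (real \<Rightarrow> real) \<Rightarrow> bool" where
  "singular_solution N p U \<longleftrightarrow>
     (let \<mu> = 2 / (p - 1); a = (\<mu> * (N - 2 - \<mu>)) powr (\<mu> / 2) in
      (\<exists>U1 U2. \<forall>\<theta>\<in>{0<..<pi}.
          (U has_real_derivative U1 \<theta>) (at \<theta>) \<and>
          (U1 has_real_derivative U2 \<theta>) (at \<theta>) \<and>
          U2 \<theta> + (N - 1) * (cos \<theta> / sin \<theta>) * U1 \<theta> + \<bar>U \<theta>\<bar> powr (p - 1) * U \<theta> = 0) \<and>
      U \<sim>[at_right 0] (\<lambda>\<theta>. a * (cos (\<theta> / 2)) powr (-(N - 2)) * (2 * tan (\<theta> / 2)) powr (-\<mu>)))"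

definition first_zero :: "(real \<Rightarrow> real) \<Rightarrow> real \<Rightarrow> bool" where
  "first_zero U T \<longleftrightarrow> T \<in> {0<..<pi} \<and> U T = 0 \<and> (\<forall>\<theta>\<in>{0<..<T}. U \<theta> \<noteq> 0)"

end

theory Submission
  imports Defs
begin


lemma alg:
  fixes s c S u u1 up l p x q U2 :: real
  assumes p: "p + 1 \<noteq> 0" and sc: "s^2 + c^2 = 1" and q: "c = q * s"
    and U2: "U2 = - (x * q * u1 + up)"
  shows "((2 * (c^2 - s^2) + l * (x * c * S)) * (s * S) + (2 * s * c + l * (s * S)) * (x * c * S)) * u1^2 / 2
      + (2 * s * c + l * (s * S)) * (s * S) * (2 * u1 * U2) / 2
      + (x * c * S * u * u1 + (s * S) * u1 * u1 + (s * S) * u * U2)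
      + (((2 * (c^2 - s^2) + l * (x * c * S)) * (s * S) + (2 * s * c + l * (s * S)) * (x * c * S)) * (up * u)
        + (2 * s * c + l * (s * S)) * (s * S) * ((p+1) * up * u1)) / (p+1)
   = (s * S) * ((2 - x) * c^2 * u1^2 + (up * u) * (2 * (x + 1) * c^2 - 2 * s^2 + 2 * l * x * S * c - (p+1)) / (p+1))"
proof -
  show ?thesis unfolding U2 using p
    apply (simp add: field_simps)
    using sc q by algebra
qed

definition Pf :: "nat \<Rightarrow> real \<Rightarrow> real \<Rightarrow> (real\<Rightarrow>real) \<Rightarrow> (real\<Rightarrow>real) \<Rightarrow> real \<Rightarrow> real" where
 "Pf n l p U U1 t = (2 * sin t * cos t + l * sin t^n) * sin t^n * (U1 t)^2/2 + sin t^n * U t * U1 t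
    + (2 * sin t * cos t + l * sin t^n) * sin t^n * U t powr (p+1)/(p+1)"

definition PD :: "nat \<Rightarrow> real \<Rightarrow> real \<Rightarrow> real \<Rightarrow> real \<Rightarrow> real \<Rightarrow> real" where
 "PD n l p u u1 t = sin t^n * ((2 - real n) * cos t^2 * u1^2 + u powr (p+1) *
       (2 * (real n+1) * cos t^2 - 2 * sin t^2 + 2 * l * real n * sin t^(n-1) * cos t - (p+1))/(p+1))"

lemma Pf_deriv:
  assumes n: "n \<ge> 1" and p: "p > 0" and s: "sin t \<noteq> 0" and Up: "U t > 0"
    and dU: "(U has_real_derivative U1 t) (at t)" and dU1: "(U1 has_real_derivative U2) (at t)"
    and ode: "U2 + real n * (cos t / sin t) * U1 t + U t powr p = 0"
  shows "(Pf n l p U U1 has_real_derivative PD n l p (U t) (U1 t) t) (at t)"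
proof -
  obtain m where m: "n = Suc m" using n by (cases n) auto
  define S where "S = sin t ^ m"
  have sn: "sin t ^ n = sin t * S" unfolding S_def m by simp
  have sn1: "sin t ^ (n - Suc 0) = S" unfolding S_def m by simp
  have pw: "U t powr (p+1) = U t powr p * U t" using Up by (simp add: powr_add)
  have pw1: "U t powr (1+p) = U t powr p * U t" using pw by (simp add: add.commute)
  have U2: "U2 = - (real n * (cos t / sin t) * U1 t + U t powr p)" using ode by linarith
  have dw: "((\<lambda>t. sin t ^ n) has_real_derivative real n * cos t * S) (at t)"
    by (rule derivative_eq_intros refl)+ (simp add: sn1)
  have dg: "((\<lambda>t. 2 * sin t * cos t + l * sin t ^ n) has_real_derivative
      2 * (cos t^2 - sin t^2) + l * (real n * cos t * S)) (at t)"
    by (rule derivative_eq_intros dw refl)+ (simp add: power2_eq_square algebra_simps)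
  have dq: "((\<lambda>t. (U1 t)^2) has_real_derivative 2 * U1 t * U2) (at t)"
    by (rule derivative_eq_intros dU1 refl)+ simp
  have dp: "((\<lambda>t. U t powr (p+1)) has_real_derivative (p+1) * U t powr p * U1 t) (at t)"
    by (rule derivative_eq_intros dU refl | simp add: Up)+
  note dGW = DERIV_mult[OF dg dw]
  note A = DERIV_cdivide[OF DERIV_mult[OF dGW dq], of 2]
  note B = DERIV_mult[OF DERIV_mult[OF dw dU] dU1]
  note C = DERIV_cdivide[OF DERIV_mult[OF dGW dp], of "p+1"]
  have fe: "Pf n l p U U1 = (\<lambda>x. (2 * sin x * cos x + l * sin x ^ n) * sin x ^ n * (U1 x)^2 / 2
      + sin x ^ n * U x * U1 x + (2 * sin x * cos x + l * sin x ^ n) * sin x ^ n * U x powr (p+1) / (p+1))"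
    by (rule ext) (simp add: Pf_def)
  have d0: "(Pf n l p U U1 has_real_derivative
      ((2 * (cos t^2 - sin t^2) + l * (real n * cos t * S)) * sin t ^ n + (2 * sin t * cos t + l * sin t ^ n) * (real n * cos t * S)) * (U1 t)^2 / 2
      + (2 * sin t * cos t + l * sin t ^ n) * sin t ^ n * (2 * U1 t * U2) / 2
      + (real n * cos t * S * U t * U1 t + sin t ^ n * U1 t * U1 t + sin t ^ n * U t * U2)
      + (((2 * (cos t^2 - sin t^2) + l * (real n * cos t * S)) * sin t ^ n + (2 * sin t * cos t + l * sin t ^ n) * (real n * cos t * S)) * U t powr (p+1)
        + (2 * sin t * cos t + l * sin t ^ n) * sin t ^ n * ((p+1) * U t powr p * U1 t)) / (p+1)) (at t)"
    unfolding fe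
    apply (rule DERIV_cong[OF DERIV_add[OF DERIV_add[OF A B] C]])
    using p sn1 by (simp add: field_simps)
  have e: "PD n l p (U t) (U1 t) t = (sin t * S) * ((2 - real n) * cos t^2 * U1 t^2 + (U t powr p * U t) *
       (2 * (real n+1) * cos t^2 - 2 * sin t^2 + 2 * l * real n * S * cos t - (p+1))/(p+1))"
    unfolding PD_def sn pw using sn1 by (simp add: algebra_simps)
  show ?thesis
    apply (rule DERIV_cong[OF d0])
    unfolding e sn pw
    apply (rule alg[where q = "cos t / sin t"])
    using p s U2 by auto
qed
lemma key_contra:
  fixes P D :: "real \<Rightarrow> real"
  assumes ab: "a < b" and cont: "continuous_on {a..b} P"
    and der: "\<And>x. a < x \<Longrightarrow> x < b \<Longrightarrow> (P has_real_derivative D x) (at x)"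
    and neg: "\<And>x. a < x \<Longrightarrow> x < b \<Longrightarrow> D x \<le> 0"
    and ends: "P a \<le> P b" and t0: "a < t0" "t0 < b" and st: "D t0 < 0"
  shows False
proof -
  have ex: "\<exists>y. DERIV P z :> y \<and> y \<le> 0" if "a < z" "z < b" for z
    using der[OF that] neg[OF that] by blast
  have const: "P x = P a" if x: "a < x" "x < b" for x
  proof -
    have "P x \<le> P a"
      apply (rule DERIV_nonpos_imp_decreasing_open[of a x P])
      using x ex apply auto[2]
      using cont x by (auto intro: continuous_on_subset)
    moreover have "P b \<le> P x"
      apply (rule DERIV_nonpos_imp_decreasing_open[of x b P])
      using x ex apply auto[2]
      using cont x by (auto intro: continuous_on_subset)
    ultimately show ?thesis using ends by linarith
  qed
  have "((\<lambda>_. P a) has_real_derivative D t0) (at t0)"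
    apply (rule has_field_derivative_transform_within_open[OF der[OF t0], of "{a<..<b}"])
    using t0 const by auto
  moreover have "((\<lambda>_. P a) has_real_derivative 0) (at t0)" by simp
  ultimately have "D t0 = 0" by (rule DERIV_unique)
  with st show False by simp
qed

definition Cf :: "nat \<Rightarrow> real \<Rightarrow> real \<Rightarrow> real" where
  "Cf n l t = 2 * (real n + 1) * cos t^2 - 2 * sin t^2 + 2 * l * real n * sin t^(n-1) * cos t"

lemma nonexist:
  fixes N :: nat and p l \<Theta> :: real
  assumes N: "N \<ge> 3" and p: "p > 0" and T: "0 < \<Theta>" "\<Theta> < pi"
    and gT: "2 * sin \<Theta> * cos \<Theta> + l * sin \<Theta> ^ (N - 1) \<ge> 0"
    and coef: "\<And>t. 0 < t \<Longrightarrow> t < \<Theta> \<Longrightarrow> Cf (N - 1) l t \<le> p + 1"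
    and strict: "\<exists>t. 0 < t \<and> t < \<Theta> \<and> Cf (N - 1) l t < p + 1"
  shows "\<not> regular_solution (real N) p \<Theta> U"
proof
  assume "regular_solution (real N) p \<Theta> U"
  then obtain U1 U2 where
    d: "\<forall>\<theta>\<in>{0..\<Theta>}. (U has_real_derivative U1 \<theta>) (at \<theta> within {0..\<Theta>}) \<and>
                          (U1 has_real_derivative U2 \<theta>) (at \<theta> within {0..\<Theta>})"
    and ode: "\<forall>\<theta>\<in>{0<..<\<Theta>}. U2 \<theta> + (real N - 1) * (cos \<theta> / sin \<theta>) * U1 \<theta> + U \<theta> powr p = 0"
    and UT: "U \<Theta> = 0" and Upos: "\<forall>\<theta>\<in>{0..<\<Theta>}. U \<theta> > 0"
    unfolding regular_solution_def by blast
  define n where "n = N - 1"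
  have n: "n \<ge> 2" and rn: "real N - 1 = real n" using N unfolding n_def by auto
  define P where "P = Pf n l p U U1"
  define D where "D t = PD n l p (U t) (U1 t) t" for t
  have contU: "continuous_on {0..\<Theta>} U" and contU1: "continuous_on {0..\<Theta>} U1"
    using d unfolding continuous_on_eq_continuous_within by (auto intro: DERIV_continuous)
  have Unn: "\<forall>x\<in>{0..\<Theta>}. U x \<ge> 0"
    using Upos UT by (metis atLeastAtMost_iff atLeastLessThan_iff less_eq_real_def order_refl)
  have cpw: "continuous_on {0..\<Theta>} (\<lambda>x. U x powr (p+1))"
    by (rule continuous_on_powr'[OF contU continuous_on_const]) (use Unn p in auto)
  have cont: "continuous_on {0..\<Theta>} P"
    unfolding P_def Pf_def
    by (intro continuous_on_add continuous_on_mult continuous_on_divide continuous_on_power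
        continuous_on_sin continuous_on_cos continuous_on_id continuous_on_const contU contU1 cpw)
       (use p in auto)
  have sinpos: "sin t > 0" if "0 < t" "t < \<Theta>" for t
    using that T by (intro sin_gt_zero) auto
  have der: "(P has_real_derivative D t) (at t)" if t: "0 < t" "t < \<Theta>" for t
    unfolding P_def D_def
  proof (rule Pf_deriv)
    show "(U has_real_derivative U1 t) (at t)" "(U1 has_real_derivative U2 t) (at t)"
      using d[rule_format, of t] t at_within_Icc_at[of 0 t \<Theta>] by auto
    show "U2 t + real n * (cos t / sin t) * U1 t + U t powr p = 0" using ode t rn by auto
  qed (use n p sinpos[OF t] Upos t in auto)
  have neg: "D t \<le> 0" if t: "0 < t" "t < \<Theta>" for t
  proof -
    have "(2 - real n) * cos t^2 * U1 t^2 \<le> 0" using n by (auto intro!: mult_nonpos_nonneg)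
    moreover have "U t powr (p+1) * (Cf n l t - (p+1)) / (p+1) \<le> 0"
      using coef[OF t] p unfolding n_def
      by (intro divide_nonpos_pos mult_nonneg_nonpos) auto
    ultimately show ?thesis unfolding D_def PD_def Cf_def[symmetric]
      using sinpos[OF t] by (intro mult_nonneg_nonpos) auto
  qed
  obtain t0 where t0: "0 < t0" "t0 < \<Theta>" "Cf n l t0 < p + 1" using strict unfolding n_def by auto
  have st: "D t0 < 0"
  proof -
    have "(2 - real n) * cos t0^2 * U1 t0^2 \<le> 0" using n by (auto intro!: mult_nonpos_nonneg)
    moreover have "U t0 powr (p+1) * (Cf n l t0 - (p+1)) / (p+1) < 0"
      using t0 p Upos[rule_format, of t0] by (intro divide_neg_pos mult_pos_neg) auto
    ultimately show ?thesis unfolding D_def PD_def Cf_def[symmetric]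
      using sinpos[OF t0(1,2)] by (intro mult_pos_neg) auto
  qed
  have P0: "P 0 = 0" unfolding P_def Pf_def using n by (simp add: power_0_left)
  have "sin \<Theta> > 0" using T by (intro sin_gt_zero) auto
  hence PT: "P \<Theta> \<ge> 0" unfolding P_def Pf_def UT using gT T p unfolding n_def
    by (auto intro!: mult_nonneg_nonneg)
  show False
    by (rule key_contra[OF T(1) cont der neg _ t0(1,2) st]) (use P0 PT in auto)
qed
lemma N3_nonexist:
  fixes p \<Theta> :: real
  assumes p: "p \<ge> 5" and T: "0 < \<Theta>" "\<Theta> \<le> pi - arcsin (4 / (p - 1))"
  shows "\<not> regular_solution 3 p \<Theta> U"
proof -
  define y where "y = 4 / (p - 1)"
  have y: "0 < y" "y \<le> 1" using p by (auto simp: y_def field_simps)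
  have A: "0 < arcsin y" using arcsin_less_mono[of 0 y] y by simp
  have A2: "arcsin y \<le> pi/2" by (rule arcsin_ubound) (use y in auto)
  have Tpi: "\<Theta> < pi" using T A unfolding y_def by linarith
  define \<alpha> where "\<alpha> = sqrt (p - 5)"
  define \<beta> where "\<beta> = sqrt (p + 3)"
  define l where "l = \<alpha> * \<beta> / 2"
  have ab: "\<alpha>^2 = p - 5" "\<beta>^2 = p + 3" "\<beta> > 0" "\<alpha> \<ge> 0"
    using p by (auto simp: \<alpha>_def \<beta>_def)
  have l0: "l \<ge> 0" using ab by (simp add: l_def)
  have key: "p + 1 - Cf 2 l t = (\<alpha> * cos t - \<beta> * sin t)^2" for t
  proof -
    have "Cf 2 l t = 6 * cos t^2 - 2 * sin t^2 + 4 * l * sin t * cos t"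
      by (simp add: Cf_def)
    moreover have sc: "sin t^2 + cos t^2 = 1" by simp
    ultimately show ?thesis unfolding l_def using ab(1,2)
      apply (simp add: power2_diff power_mult_distrib)
      using sc by algebra
  qed
  have gT: "2 * sin \<Theta> * cos \<Theta> + l * sin \<Theta> ^ (3 - 1) \<ge> 0"
  proof -
    have s: "sin \<Theta> > 0" using T Tpi by (intro sin_gt_zero) auto
    have "2 * cos \<Theta> + l * sin \<Theta> \<ge> 0"
    proof (cases "cos \<Theta> \<ge> 0")
      case True then show ?thesis using l0 s by simp
    next
      case False
      have "\<Theta> > pi/2" using False cos_ge_zero[of \<Theta>] T by (cases "\<Theta> \<le> pi/2") auto
      have "sin (arcsin y) \<le> sin (pi - \<Theta>)"
        apply (rule sin_monotone_2pi_le) using A A2 T \<open>\<Theta> > pi/2\<close> unfolding y_def by auto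
      hence sy: "sin \<Theta> \<ge> y" using y by simp
      have "(l * sin \<Theta>)^2 \<ge> (2 * cos \<Theta>)^2"
      proof -
        have l2: "l^2 = (p - 5) * (p + 3) / 4" unfolding l_def using ab
          by (simp add: power_mult_distrib power_divide)
        have "y^2 \<le> sin \<Theta>^2" using sy y by (intro power_mono) auto
        hence "(l^2 + 4) * y^2 \<le> (l^2 + 4) * sin \<Theta>^2" by (intro mult_left_mono) auto
        moreover have "(l^2 + 4) * y^2 = 4"
        proof -
          have A: "l^2 + 4 = (p-1)^2/4" unfolding l2 by (simp add: field_simps power2_eq_square)
          have B: "y^2 = 16/(p-1)^2" unfolding y_def by (simp add: power_divide)
          have nz: "(p-1)^2 \<noteq> 0" using p by simp
          have "(l^2 + 4) * y^2 = ((p-1)^2/4) * (16/(p-1)^2)" by (simp only: A B)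
          also have "\<dots> = 4" using nz by (simp add: field_simps)
          finally show ?thesis .
        qed
        ultimately have "4 \<le> (l^2 + 4) * sin \<Theta>^2" by simp
        moreover have cs: "cos \<Theta>^2 = 1 - sin \<Theta>^2" by (simp add: cos_squared_eq)
        ultimately have h4: "4 \<le> (l^2 + 4) * sin \<Theta>^2" by simp
        have "4 * cos \<Theta>^2 \<le> l^2 * sin \<Theta>^2" unfolding cs using h4 by (simp add: algebra_simps)
        thus ?thesis by (simp add: power_mult_distrib)
      qed
      hence "\<bar>2 * cos \<Theta>\<bar> \<le> \<bar>l * sin \<Theta>\<bar>" using abs_le_square_iff by blast
      thus ?thesis using l0 s False by simp
    qed
    moreover have "2 * sin \<Theta> * cos \<Theta> + l * sin \<Theta> ^ (3 - 1) = sin \<Theta> * (2 * cos \<Theta> + l * sin \<Theta>)"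
      by (simp add: power2_eq_square algebra_simps)
    ultimately show ?thesis using s by simp
  qed
  have coef: "Cf (3 - 1) l t \<le> p + 1" for t
  proof -
    have "Cf 2 l t \<le> p + 1" using key[of t] zero_le_power2[of "\<alpha> * cos t - \<beta> * sin t"] by linarith
    thus ?thesis by simp
  qed
  have strict: "\<exists>t. 0 < t \<and> t < \<Theta> \<and> Cf (3 - 1) l t < p + 1"
  proof (rule ccontr)
    assume nt: "\<not> ?thesis"
    have z: "\<alpha> * cos t = \<beta> * sin t" if "0 < t" "t < \<Theta>" for t
    proof -
      have "Cf 2 l t \<ge> p + 1" using nt that by auto
      hence "(\<alpha> * cos t - \<beta> * sin t)^2 \<le> 0" using key[of t] by linarith
      hence "\<alpha> * cos t - \<beta> * sin t = 0" by simp
      thus ?thesis by simp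
    qed
    have t12: "0 < \<Theta>/4" "\<Theta>/4 < \<Theta>/2" "\<Theta>/2 < \<Theta>" "\<Theta>/2 \<le> pi/2" using T Tpi by auto
    have "sin (\<Theta>/4) < sin (\<Theta>/2)" by (rule sin_monotone_2pi) (use t12 in auto)
    moreover have "cos (\<Theta>/2) < cos (\<Theta>/4)" by (rule cos_monotone_0_pi) (use t12 in auto)
    moreover have "\<alpha> * (cos (\<Theta>/4) - cos (\<Theta>/2)) = \<beta> * (sin (\<Theta>/4) - sin (\<Theta>/2))"
      using z[of "\<Theta>/4"] z[of "\<Theta>/2"] t12 by (simp add: algebra_simps)
    ultimately show False using ab(3,4)
      mult_nonneg_nonneg[of \<alpha> "cos (\<Theta>/4) - cos (\<Theta>/2)"]
      mult_pos_neg[of \<beta> "sin (\<Theta>/4) - sin (\<Theta>/2)"] by linarith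
  qed
  show ?thesis using nonexist[of 3 p \<Theta> l U] p T Tpi gT coef strict by simp
qed
lemma genN_facts:
  fixes N :: nat and \<delta> :: real
  assumes N: "N \<ge> 3" and d: "0 < \<delta>" "\<delta> \<le> pi/2"
  defines "l \<equiv> 2 / sin \<delta> ^ (N - 2)"
  shows "l > 0" "Cf (N - 1) l t \<le> 2 * real N + 2 * l * (real N - 1)"
    "0 < \<Theta> \<Longrightarrow> \<Theta> \<le> pi - \<delta> \<Longrightarrow> 2 * sin \<Theta> * cos \<Theta> + l * sin \<Theta> ^ (N - 1) \<ge> 0"
proof -
  have sd: "sin \<delta> > 0" using d by (intro sin_gt_zero) auto
  show l0: "l > 0" unfolding l_def using sd by simp
  have rN: "real (N - 1) = real N - 1" using N by auto
  have nn: "N - 1 - 1 = N - 2" by simp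
  have c2: "cos t^2 \<le> 1" by (simp add: abs_square_le_1)
  have "\<bar>sin t ^ (N - 2) * cos t\<bar> \<le> 1"
    by (simp add: abs_mult power_abs) (intro mult_le_one power_le_one abs_sin_le_one abs_cos_le_one; simp)
  hence sc: "sin t ^ (N - 2) * cos t \<le> 1" by linarith
  have "2 * l * (real N - 1) * (sin t ^ (N - 2) * cos t) \<le> 2 * l * (real N - 1) * 1"
    using l0 N sc by (intro mult_left_mono) auto
  moreover have "2 * real N * cos t^2 \<le> 2 * real N * 1" using c2 by (intro mult_left_mono) auto
  moreover have "0 \<le> sin t ^2" by simp
  moreover have "Cf (N - 1) l t = 2 * real N * cos t^2 - 2 * sin t^2 + 2 * l * (real N - 1) * (sin t^(N-2) * cos t)"
    unfolding Cf_def rN nn by (simp add: algebra_simps)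
  ultimately show "Cf (N - 1) l t \<le> 2 * real N + 2 * l * (real N - 1)"
    by linarith
  assume T: "0 < \<Theta>" "\<Theta> \<le> pi - \<delta>"
  have s: "sin \<Theta> > 0" using T d by (intro sin_gt_zero) auto
  have "2 * cos \<Theta> + l * sin \<Theta> ^ (N - 2) \<ge> 0"
  proof (cases "cos \<Theta> \<ge> 0")
    case True then show ?thesis using l0 s by simp
  next
    case False
    have "\<Theta> > pi/2" using False cos_ge_zero[of \<Theta>] T by (cases "\<Theta> \<le> pi/2") auto
    have "sin \<delta> \<le> sin (pi - \<Theta>)"
      apply (rule sin_monotone_2pi_le) using d T \<open>\<Theta> > pi/2\<close> by auto
    hence "sin \<delta> \<le> sin \<Theta>" by simp
    hence "sin \<delta> ^ (N - 2) \<le> sin \<Theta> ^ (N - 2)" using sd by (intro power_mono) auto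
    hence "l * sin \<delta> ^ (N - 2) \<le> l * sin \<Theta> ^ (N - 2)" using l0 by (intro mult_left_mono) auto
    moreover have "l * sin \<delta> ^ (N - 2) = 2" unfolding l_def using sd by simp
    moreover have "cos \<Theta> \<ge> -1" by simp
    ultimately show ?thesis by linarith
  qed
  moreover have "N - 1 = Suc (N - 2)" using N by simp
  hence "2 * sin \<Theta> * cos \<Theta> + l * sin \<Theta> ^ (N - 1) = sin \<Theta> * (2 * cos \<Theta> + l * sin \<Theta> ^ (N - 2))"
    by (simp add: algebra_simps)
  ultimately show "2 * sin \<Theta> * cos \<Theta> + l * sin \<Theta> ^ (N - 1) \<ge> 0"
    using s by simp
qed

lemma genN_nonexist:
  fixes N :: nat and \<delta> p \<Theta> :: real
  assumes N: "N \<ge> 3" and d: "0 < \<delta>" "\<delta> \<le> pi/2"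
    and p: "p > 0" "p + 1 > 2 * real N + 2 * (2 / sin \<delta> ^ (N - 2)) * (real N - 1)"
    and T: "0 < \<Theta>" "\<Theta> \<le> pi - \<delta>"
  shows "\<not> regular_solution (real N) p \<Theta> U"
proof -
  define l where "l = 2 / sin \<delta> ^ (N - 2)"
  note f = genN_facts[OF N d, folded l_def]
  have Tpi: "\<Theta> < pi" using T d by linarith
  have c: "Cf (N - 1) l t < p + 1" for t using f(2)[of t] p(2) unfolding l_def by linarith
  show ?thesis
    apply (rule nonexist[OF N p(1) T(1) Tpi, of l])
    using f(3)[OF T] c T by (auto intro!: exI[of _ "\<Theta>/2"] less_imp_le)
qed



lemma tan_ge_self:
  fixes x :: real assumes "0 \<le> x" "x < pi/2" shows "x \<le> tan x"
proof -
  have "(\<lambda>y. tan y - y) 0 \<le> (\<lambda>y. tan y - y) x"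
  proof (rule DERIV_nonneg_imp_nondecreasing[OF assms(1)])
    fix y assume y: "0 \<le> y" "y \<le> x"
    have c: "cos y > 0" using y assms by (intro cos_gt_zero_pi) auto
    have c1: "cos y ^ 2 \<le> 1" by (simp add: abs_square_le_1)
    have "inverse (cos y ^ 2) \<ge> 1" using c c1 by (simp add: one_le_inverse_iff)
    moreover have "((\<lambda>y. tan y - y) has_real_derivative inverse (cos y ^ 2) - 1) (at y)"
      using c by (auto intro!: derivative_eq_intros)
    ultimately show "\<exists>d. ((\<lambda>y. tan y - y) has_real_derivative d) (at y) \<and> 0 \<le> d" by auto
  qed
  thus ?thesis by simp
qed

lemma f_bound:
  fixes N \<mu> a \<theta> :: real
  assumes N: "N \<ge> 2" and mu: "\<mu> > 0" and a: "a \<ge> 0" and t: "0 < \<theta>" "\<theta> \<le> 1"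
  shows "a * (cos (\<theta> / 2)) powr (-(N - 2)) * (2 * tan (\<theta> / 2)) powr (-\<mu>) \<le> a * 2 powr (N - 2) * \<theta> powr (-\<mu>)"
proof -
  have "cos (pi/3) \<le> cos (\<theta>/2)"
    by (rule cos_monotone_0_pi_le) (use t pi_ge_two in auto)
  hence c: "1/2 \<le> cos (\<theta>/2)" by (simp add: cos_60)
  have "cos (\<theta> / 2) powr (-(N - 2)) \<le> (1/2) powr (-(N - 2))"
    by (rule powr_mono2') (use N c in auto)
  also have "(1/2::real) powr (-(N - 2)) = 2 powr (N - 2)"
  proof -
    have "(2::real) powr (2 - N) = 2 powr (- (N - 2))" by simp
    also have "\<dots> = 1 / 2 powr (N - 2)" by (rule powr_minus_divide)
    finally show ?thesis by (simp add: powr_divide)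
  qed
  finally have c2: "cos (\<theta> / 2) powr (-(N - 2)) \<le> 2 powr (N - 2)" .
  have "\<theta>/2 \<le> tan (\<theta>/2)" by (rule tan_ge_self) (use t pi_ge_two in auto)
  hence "(2 * tan (\<theta> / 2)) powr (-\<mu>) \<le> \<theta> powr (-\<mu>)"
    by (intro powr_mono2') (use mu t in auto)
  with c2 show ?thesis using a
    by (intro mult_mono mult_left_mono) auto
qed



lemma pS_facts:
  fixes N :: nat and p :: real
  assumes N: "N \<ge> 3" and p: "p > pS (real N)"
  shows "p > 1" "2 / (p - 1) > 0" "real N - 2 - 2 * (2 / (p - 1)) > 0" "real N - 2 - 2 / (p - 1) > 0"
proof -
  have N2: "real N - 2 > 0" using N by simp
  have "(real N + 2) / (real N - 2) > 1" using N2 by simp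
  thus p1: "p > 1" using p unfolding pS_def by linarith
  show "2 / (p - 1) > 0" using p1 by simp
  have "p * (real N - 2) > real N + 2" using p N2 unfolding pS_def by (simp add: field_simps)
  hence "4 < (p - 1) * (real N - 2)" by (simp add: algebra_simps)
  hence "4 / (p - 1) < real N - 2" using p1 by (simp add: field_simps)
  thus "real N - 2 - 2 * (2 / (p - 1)) > 0" by simp
  moreover have "2 / (p - 1) > 0" using p1 by simp
  ultimately show "real N - 2 - 2 / (p - 1) > 0" by linarith
qed

lemma P_small:
  fixes N :: nat and r u u1 A B l p \<mu> :: real
  assumes N: "N \<ge> 3" and r: "0 < r" "r < 1" and l: "l \<ge> 0" and p: "p > 1" and mu: "\<mu> = 2 / (p - 1)"
    and u: "0 < u" "u \<le> A * r powr (-\<mu>)" and u1: "\<bar>u1\<bar> \<le> B * r powr (-\<mu>) / r"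
  shows "(2 * sin r * cos r + l * sin r^(N-1)) * sin r^(N-1) * u1^2/2 + sin r^(N-1) * u * u1
     + (2 * sin r * cos r + l * sin r^(N-1)) * sin r^(N-1) * u powr (p+1)/(p+1)
     \<le> ((2+l) * B^2/2 + A * B + (2+l) * A powr (p+1)/(p+1)) * r powr (real N - 2 - 2 * \<mu>)"
proof -
  define s where "s = sin r"
  define c where "c = cos r"
  define X where "X = r powr (-\<mu>)"
  define R where "R = r ^ (N - 2)"
  define g where "g = 2 * s * c + l * s^(N-1)"
  define w where "w = s^(N-1)"
  have s: "0 < s" "s \<le> r" "s \<le> 1" unfolding s_def using r pi_ge_two
    by (auto intro!: sin_gt_zero sin_x_le_x)
  have c: "\<bar>c\<bar> \<le> 1" unfolding c_def by simp
  have X: "X > 0" unfolding X_def using r by simp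
  have R: "R > 0" unfolding R_def using r by simp
  have "A * X > 0" using u unfolding X_def[symmetric] by linarith
  hence A: "A \<ge> 0" using X by (simp add: zero_less_mult_iff)
  have "B * X / r \<ge> 0" using u1 unfolding X_def[symmetric] by (meson abs_ge_zero order_trans)
  hence B: "B \<ge> 0" using X r by (simp add: zero_le_divide_iff zero_le_mult_iff)
  have Nn: "N - 1 = Suc (N - 2)" using N by simp
  have w: "0 < w" "w \<le> r * R" unfolding w_def R_def Nn using s r
    by (auto intro!: mult_mono power_mono)
  have sN: "s^(N-1) \<le> s" unfolding Nn using s by (simp add: power_le_one mult_left_le)
  have g: "\<bar>g\<bar> \<le> (2 + l) * r"
  proof -
    have "\<bar>g\<bar> \<le> \<bar>2 * s * c\<bar> + \<bar>l * s^(N-1)\<bar>" unfolding g_def by (rule abs_triangle_ineq)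
    also have "\<dots> = 2 * s * \<bar>c\<bar> + l * s^(N-1)" using s l by (simp add: abs_mult)
    finally have "\<bar>g\<bar> \<le> 2 * s * \<bar>c\<bar> + l * s^(N-1)" .
    also have "\<dots> \<le> 2 * s + l * s" using s c l sN by (intro add_mono mult_left_mono) auto
    also have "\<dots> \<le> 2 * r + l * r" using s l by (intro add_mono mult_left_mono) auto
    finally show ?thesis by (simp add: algebra_simps)
  qed
  define Q where "Q = R * X^2"
  have u1': "u1^2 \<le> (B * X / r)^2" using u1 unfolding X_def[symmetric]
    by (metis abs_ge_zero power2_abs power_mono)
  have T1: "g * w * u1^2/2 \<le> (2+l) * B^2/2 * Q"
  proof -
    have "g * w * u1^2/2 \<le> \<bar>g\<bar> * w * u1^2/2" using w by (intro divide_right_mono mult_right_mono) auto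
    also have "\<dots> \<le> ((2 + l) * r) * (r * R) * (B * X / r)^2 / 2"
      using g w u1' by (intro divide_right_mono mult_mono) auto
    also have "\<dots> = (2+l) * B^2/2 * Q" unfolding Q_def using r by (simp add: field_simps power2_eq_square)
    finally show ?thesis .
  qed
  have T2: "w * u * u1 \<le> A * B * Q"
  proof -
    have "w * u * u1 \<le> w * u * \<bar>u1\<bar>" using w u by (intro mult_left_mono) auto
    also have "\<dots> \<le> (r * R) * (A * X) * (B * X / r)"
      using w u u1 unfolding X_def[symmetric] by (intro mult_mono) auto
    also have "\<dots> = A * B * Q" unfolding Q_def using r by (simp add: field_simps power2_eq_square)
    finally show ?thesis .
  qed
  have XP: "X powr (p+1) = X^2 / r^2"
  proof -
    have "X powr (p+1) = r powr (-\<mu> * (p+1))" unfolding X_def by (simp add: powr_powr)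
    also have "-\<mu> * (p+1) = -\<mu> + -\<mu> + -2"
    proof -
      have "\<mu> * (p - 1) = 2" unfolding mu using p by (simp add: field_simps)
      thus ?thesis by (simp add: algebra_simps)
    qed
    also have "r powr (-\<mu> + -\<mu> + -2) = X * X / r^2"
    proof -
      have "r powr (-\<mu> + -\<mu> + -2) = r powr (-\<mu>) * r powr (-\<mu>) * r powr (-2)" by (simp only: powr_add)
      moreover have "r powr (-2) = 1 / r^2" using r by (simp add: powr_minus_divide powr_numeral)
      ultimately show ?thesis unfolding X_def by simp
    qed
    finally show ?thesis by (simp add: power2_eq_square)
  qed
  have uP: "u powr (p+1) \<le> A powr (p+1) * (X^2 / r^2)"
  proof -
    have "u powr (p+1) \<le> (A * X) powr (p+1)" using u p unfolding X_def[symmetric] by (intro powr_mono2) auto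
    also have "\<dots> = A powr (p+1) * (X^2 / r^2)" using A X by (simp add: powr_mult XP)
    finally show ?thesis .
  qed
  have T3: "g * w * u powr (p+1)/(p+1) \<le> (2+l) * A powr (p+1)/(p+1) * Q"
  proof -
    have "g * w * u powr (p+1)/(p+1) \<le> \<bar>g\<bar> * w * u powr (p+1)/(p+1)" using w p
      by (intro divide_right_mono mult_right_mono) auto
    also have "\<dots> \<le> ((2 + l) * r) * (r * R) * (A powr (p+1) * (X^2 / r^2)) / (p+1)"
      using g w uP p by (intro divide_right_mono mult_mono) auto
    also have "\<dots> = (2+l) * A powr (p+1)/(p+1) * Q"
    proof -
      have "r * r + p * (r * r) > 0" using r p by (simp add: add_pos_pos)
      thus ?thesis unfolding Q_def using r p by (simp add: field_simps power2_eq_square)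
    qed
    finally show ?thesis .
  qed
  have Qe: "Q = r powr (real N - 2 - 2 * \<mu>)"
  proof -
    have "R = r powr (real N - 2)" unfolding R_def using r N by (simp add: powr_realpow[symmetric] of_nat_diff)
    moreover have "X^2 = r powr (- 2 * \<mu>)" unfolding X_def using r by (simp add: power2_eq_square powr_add[symmetric])
    ultimately show ?thesis unfolding Q_def by (simp add: powr_add[symmetric])
  qed
  have L: "(2 * sin r * cos r + l * sin r^(N-1)) * sin r^(N-1) * u1^2/2 + sin r^(N-1) * u * u1
     + (2 * sin r * cos r + l * sin r^(N-1)) * sin r^(N-1) * u powr (p+1)/(p+1)
     = g * w * u1^2/2 + w * u * u1 + g * w * u powr (p+1)/(p+1)" unfolding g_def w_def s_def c_def by simp
  have K: "((2+l) * B^2/2 + A * B + (2+l) * A powr (p+1)/(p+1)) * Q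
     = (2+l) * B^2/2 * Q + A * B * Q + (2+l) * A powr (p+1)/(p+1) * Q" by (simp add: algebra_simps)
  show ?thesis unfolding L Qe[symmetric] K using T1 T2 T3 by linarith
qed
lemma sing_bound:
  fixes N :: nat and \<delta> p T :: real and U :: "real \<Rightarrow> real"
  assumes N: "N \<ge> 3" and d: "0 < \<delta>" "\<delta> \<le> pi/2" and p: "p > pS (real N)"
    and pl: "p + 1 > 2 * real N + 2 * (2 / sin \<delta> ^ (N - 2)) * (real N - 1)"
    and S: "singular_solution (real N) p U" and Z: "first_zero U T"
  shows "T > pi - \<delta>"
proof (rule ccontr)
  assume "\<not> T > pi - \<delta>"
  hence Tle: "T \<le> pi - \<delta>" by simp
  from Z have T0: "0 < T" "T < pi" and UT: "U T = 0" and Unz: "\<And>x. 0 < x \<Longrightarrow> x < T \<Longrightarrow> U x \<noteq> 0"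
    unfolding first_zero_def by auto
  define \<mu> where "\<mu> = 2 / (p - 1)"
  define a where "a = (\<mu> * (real N - 2 - \<mu>)) powr (\<mu> / 2)"
  define f where "f \<theta> = a * (cos (\<theta> / 2)) powr (-(real N - 2)) * (2 * tan (\<theta> / 2)) powr (-\<mu>)" for \<theta>
  note pf = pS_facts[OF N p, folded \<mu>_def]
  from S obtain U1 U2 where
    der: "\<forall>\<theta>\<in>{0<..<pi}. (U has_real_derivative U1 \<theta>) (at \<theta>) \<and>
          (U1 has_real_derivative U2 \<theta>) (at \<theta>) \<and>
          U2 \<theta> + (real N - 1) * (cos \<theta> / sin \<theta>) * U1 \<theta> + \<bar>U \<theta>\<bar> powr (p - 1) * U \<theta> = 0"
    and asy: "U \<sim>[at_right 0] f"
    unfolding singular_solution_def Let_def \<mu>_def[symmetric] a_def[symmetric] f_def[abs_def] by blast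
  have a0: "a > 0" unfolding a_def using pf by simp
  have fpos: "f \<theta> > 0" if "0 < \<theta>" "\<theta> < pi" for \<theta>
  proof -
    have "cos (\<theta>/2) > 0" using that by (intro cos_gt_zero_pi) auto
    moreover have "tan (\<theta>/2) > 0" using that by (intro tan_gt_zero) auto
    ultimately show ?thesis unfolding f_def using a0 by simp
  qed
  have "((\<lambda>\<theta>. U \<theta> / f \<theta>) \<longlongrightarrow> 1) (at_right 0)"
  proof (rule asymp_equivD_strong[OF asy])
    show "\<forall>\<^sub>F x in at_right 0. U x \<noteq> 0 \<or> f x \<noteq> 0"
      unfolding eventually_at_right_field
    proof (intro exI[of _ pi] conjI allI impI)
      fix y :: real assume "y > 0" "y < pi"
      thus "U y \<noteq> 0 \<or> f y \<noteq> 0" using fpos[of y] by auto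
    qed simp
  qed
  hence ev: "\<forall>\<^sub>F \<theta> in at_right 0. 1/2 < U \<theta> / f \<theta> \<and> U \<theta> / f \<theta> < 3/2 \<and> \<theta> < 1"
    by (intro eventually_conj order_tendstoD) (auto simp: eventually_at_right_field intro!: exI[of _ 1])
  then obtain b0 where b0: "b0 > 0" and hb0: "\<And>\<theta>. 0 < \<theta> \<Longrightarrow> \<theta> < b0 \<Longrightarrow>
      1/2 < U \<theta> / f \<theta> \<and> U \<theta> / f \<theta> < 3/2 \<and> \<theta> < 1"
    unfolding eventually_at_right_field by auto
  define A where "A = 3/2 * (a * 2 powr (real N - 2))"
  have Ub: "0 < U \<theta> \<and> U \<theta> \<le> A * \<theta> powr (-\<mu>)" if "0 < \<theta>" "\<theta> < b0" for \<theta>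
  proof -
    have h: "1/2 < U \<theta> / f \<theta>" "U \<theta> / f \<theta> < 3/2" "\<theta> < 1" using hb0[OF that] by auto
    have fp: "f \<theta> > 0" using fpos[of \<theta>] h that pi_ge_two by auto
    have "U \<theta> > 0" using h fp by (simp add: field_simps)
    moreover have "U \<theta> \<le> 3/2 * f \<theta>" using h fp by (simp add: field_simps)
    moreover have "f \<theta> \<le> a * 2 powr (real N - 2) * \<theta> powr (-\<mu>)"
      unfolding f_def by (rule f_bound) (use N pf a0 h that in auto)
    ultimately show ?thesis unfolding A_def by simp
  qed
  have dU: "(U has_real_derivative U1 x) (at x)" and dU1: "(U1 has_real_derivative U2 x) (at x)"
    and odeS: "U2 x + (real N - 1) * (cos x / sin x) * U1 x + \<bar>U x\<bar> powr (p - 1) * U x = 0"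
    if "0 < x" "x < pi" for x using der that by auto
  have contU: "continuous_on {x..y} U" "continuous_on {x..y} U1" if "0 < x" "y < pi" for x y
    using that by (auto intro!: continuous_at_imp_continuous_on DERIV_isCont[OF dU] DERIV_isCont[OF dU1])
  have Upos: "U x > 0" if x: "0 < x" "x < T" for x
  proof (rule ccontr)
    assume "\<not> U x > 0"
    hence Ux: "U x \<le> 0" by simp
    define y where "y = min x b0 / 2"
    have y: "0 < y" "y < b0" "y \<le> x" using x b0 unfolding y_def by auto
    have "U y > 0" using Ub[OF y(1,2)] by simp
    then obtain z where z: "y \<le> z" "z \<le> x" "U z = 0"
      using IVT2'[of U x 0 y, OF Ux _ y(3) contU(1)] y x T0 by force
    show False using Unz[of z] z y x by auto
  qed
  define n where "n = N - 1"
  define l where "l = 2 / sin \<delta> ^ (N - 2)"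
  note gf = genN_facts[OF N d, folded l_def]
  have rn: "real N - 1 = real n" using N unfolding n_def by auto
  define P where "P = Pf n l p U U1"
  define D where "D t = PD n l p (U t) (U1 t) t" for t
  have sinpos: "sin t > 0" if "0 < t" "t < pi" for t using that by (intro sin_gt_zero) auto
  have derP: "(P has_real_derivative D t) (at t)" if t: "0 < t" "t < T" for t
    unfolding P_def D_def
  proof (rule Pf_deriv)
    show "(U has_real_derivative U1 t) (at t)" "(U1 has_real_derivative U2 t) (at t)"
      using dU dU1 t T0 by auto
    have "\<bar>U t\<bar> powr (p - 1) * U t = U t powr p"
    proof -
      have "U t powr (p - 1) * U t = U t powr (p - 1) * U t powr 1" using Upos[OF t] by simp
      also have "\<dots> = U t powr p" by (simp only: powr_add[symmetric]) simp
      finally show ?thesis using Upos[OF t] by simp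
    qed
    thus "U2 t + real n * (cos t / sin t) * U1 t + U t powr p = 0"
      using odeS[of t] t T0 rn by auto
  qed (use N pf sinpos[of t] Upos[OF t] t T0 n_def in auto)
  have Dneg: "D t < 0" if t: "0 < t" "t < T" for t
  proof -
    have "(2 - real n) * cos t^2 * U1 t^2 \<le> 0" using N unfolding n_def by (auto intro!: mult_nonpos_nonneg)
    moreover have "Cf n l t < p + 1" using gf(2)[of t] pl unfolding n_def l_def by linarith
    hence "U t powr (p+1) * (Cf n l t - (p+1)) / (p+1) < 0"
      using pf Upos[OF t] by (intro divide_neg_pos mult_pos_neg) auto
    ultimately show ?thesis unfolding D_def PD_def Cf_def[symmetric]
      using sinpos[of t] t T0 by (intro mult_pos_neg) auto
  qed
  have contP: "continuous_on {x..T} P" if "0 < x" for x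
  proof -
    have Unn: "\<forall>y\<in>{x..T}. U y \<ge> 0" using Upos UT that
      by (metis atLeastAtMost_iff less_eq_real_def le_less_trans)
    have cpw: "continuous_on {x..T} (\<lambda>y. U y powr (p+1))"
      by (rule continuous_on_powr'[OF contU(1)[OF that T0(2)] continuous_on_const]) (use Unn pf in auto)
    show ?thesis unfolding P_def Pf_def
      by (intro continuous_on_add continuous_on_mult continuous_on_divide continuous_on_power
        continuous_on_sin continuous_on_cos continuous_on_id continuous_on_const contU[OF that T0(2)] cpw)
       (use pf in auto)
  qed
  have PT: "P T \<ge> 0"
    unfolding P_def Pf_def UT using gf(3)[OF T0(1) Tle] sinpos[OF T0] pf unfolding n_def
    by (auto intro!: mult_nonneg_nonneg)
  define \<theta>1 where "\<theta>1 = min b0 T / 2"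
  have th1: "0 < \<theta>1" "\<theta>1 < b0" "\<theta>1 < T" using b0 T0 unfolding \<theta>1_def by auto
  have c0: "P \<theta>1 > 0"
  proof -
    obtain l' z where z: "\<theta>1 < z" "z < T" "DERIV P z :> l'" "P T - P \<theta>1 = (T - \<theta>1) * l'"
    proof -
      have dif: "P differentiable (at x)" if "\<theta>1 < x" "x < T" for x
        using derP[of x] that th1 unfolding real_differentiable_def by auto
      from MVT[OF th1(3) contP[OF th1(1)] dif] show ?thesis using that by blast
    qed
    have "l' = D z" using DERIV_unique[OF z(3) derP[of z]] z th1 by auto
    hence "l' < 0" using Dneg[of z] z th1 by auto
    hence "(T - \<theta>1) * l' < 0" using th1 by (simp add: mult_pos_neg)
    thus ?thesis using z(4) PT by linarith
  qed
  have mono: "P \<theta>1 \<le> P \<xi>" if "0 < \<xi>" "\<xi> \<le> \<theta>1" for \<xi>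
  proof (rule DERIV_nonpos_imp_decreasing_open[OF that(2)])
    fix x assume "\<xi> < x" "x < \<theta>1"
    hence x: "0 < x" "x < T" using that th1 by auto
    show "\<exists>y. DERIV P x :> y \<and> y \<le> 0" using derP[OF x] Dneg[OF x] by (intro exI[of _ "D x"]) auto
  next
    show "continuous_on {\<xi>..\<theta>1} P" using contP[OF that(1)]
      by (rule continuous_on_subset) (use th1 in auto)
  qed
  define e where "e = real N - 2 - 2 * \<mu>"
  have e: "e > 0" unfolding e_def using pf by simp
  define B where "B = 2 * A * (1 + 2 powr \<mu>)"
  define K where "K = (2+l) * B^2/2 + A * B + (2+l) * A powr (p+1)/(p+1)"
  have "((\<lambda>\<theta>. K * \<theta> powr e) \<longlongrightarrow> K * 0 powr e) (at_right 0)"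
    by (intro tendsto_intros tendsto_powr') (use e in \<open>auto simp: eventually_at_right_field intro!: exI[of _ 1]\<close>)
  hence "((\<lambda>\<theta>. K * \<theta> powr e) \<longlongrightarrow> 0) (at_right 0)" by simp
  hence "\<forall>\<^sub>F \<theta> in at_right 0. K * \<theta> powr e < P \<theta>1 \<and> \<theta> < \<theta>1"
    using c0 th1 by (intro eventually_conj order_tendstoD(2))
      (auto simp: eventually_at_right_field intro!: exI[of _ \<theta>1])
  then obtain b2 where b2: "b2 > 0" "\<And>\<theta>. 0 < \<theta> \<Longrightarrow> \<theta> < b2 \<Longrightarrow> K * \<theta> powr e < P \<theta>1 \<and> \<theta> < \<theta>1"
    unfolding eventually_at_right_field by auto
  define \<theta> where "\<theta> = b2 / 2"
  have th: "0 < \<theta>" "K * \<theta> powr e < P \<theta>1" "\<theta> < \<theta>1" using b2 b2(2)[of \<theta>] unfolding \<theta>_def by auto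
  obtain l' \<xi> where xi: "\<theta>/2 < \<xi>" "\<xi> < \<theta>" "DERIV U \<xi> :> l'" "U \<theta> - U (\<theta>/2) = (\<theta> - \<theta>/2) * l'"
  proof -
    have "\<theta>/2 < \<theta>" using th by simp
    moreover have "continuous_on {\<theta>/2..\<theta>} U" using th th1 T0 by (intro contU(1)) auto
    moreover have "U differentiable (at x)" if "\<theta>/2 < x" "x < \<theta>" for x
      using dU[of x] that th th1 T0 unfolding real_differentiable_def by auto
    ultimately obtain l' z where "\<theta>/2 < z" "z < \<theta>" "DERIV U z :> l'" "U \<theta> - U (\<theta>/2) = (\<theta> - \<theta>/2) * l'"
      using MVT[of "\<theta>/2" \<theta> U] by blast
    thus ?thesis using that by blast
  qed
  have l'eq: "l' = U1 \<xi>" using DERIV_unique[OF xi(3) dU[of \<xi>]] xi th th1 T0 by auto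
  have xs: "0 < \<xi>" "\<xi> < b0" "\<xi> < T" "\<xi> < 1" "\<xi> < \<theta>1" using xi th th1 hb0[of \<xi>] by auto
  have U1b: "\<bar>U1 \<xi>\<bar> \<le> B * \<xi> powr (-\<mu>) / \<xi>"
  proof -
    have u1: "0 < U \<theta>" "U \<theta> \<le> A * \<theta> powr (-\<mu>)" using Ub[of \<theta>] th th1 by auto
    have u2: "0 < U (\<theta>/2)" "U (\<theta>/2) \<le> A * (\<theta>/2) powr (-\<mu>)" using Ub[of "\<theta>/2"] th th1 by auto
    have A0: "A \<ge> 0" unfolding A_def using a0 by simp
    have p1: "\<theta> powr (-\<mu>) \<le> \<xi> powr (-\<mu>)" using xs xi pf by (intro powr_mono2') auto
    have p2: "(\<theta>/2) powr (-\<mu>) \<le> (\<xi>/2) powr (-\<mu>)" using xs xi pf by (intro powr_mono2') auto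
    have p3: "(\<xi>/2) powr (-\<mu>) = 2 powr \<mu> * \<xi> powr (-\<mu>)"
      by (simp add: powr_divide powr_minus_divide)
    have "\<bar>U \<theta> - U (\<theta>/2)\<bar> \<le> A * \<theta> powr (-\<mu>) + A * (\<theta>/2) powr (-\<mu>)" using u1 u2 by linarith
    also have "\<dots> \<le> A * \<xi> powr (-\<mu>) + A * (2 powr \<mu> * \<xi> powr (-\<mu>))"
      using p1 p2 p3 A0 by (intro add_mono mult_left_mono) auto
    finally have h: "\<bar>U1 \<xi>\<bar> * (\<theta>/2) \<le> A * (1 + 2 powr \<mu>) * \<xi> powr (-\<mu>)"
      using xi(4) th unfolding l'eq by (simp add: abs_mult algebra_simps)
    have "\<bar>U1 \<xi>\<bar> * (\<xi>/2) \<le> \<bar>U1 \<xi>\<bar> * (\<theta>/2)" using xi by (intro mult_left_mono) auto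
    with h have "\<bar>U1 \<xi>\<bar> * \<xi> \<le> B * \<xi> powr (-\<mu>)" unfolding B_def by linarith
    thus ?thesis using xs by (simp add: field_simps)
  qed
  have "P \<xi> \<le> K * \<xi> powr e"
    unfolding P_def Pf_def n_def K_def e_def
    by (rule P_small[OF N xs(1,4) _ pf(1) \<mu>_def _ _ U1b])
      (use gf(1) Ub[OF xs(1,2)] in \<open>auto simp: l_def\<close>)
  also have "\<dots> \<le> K * \<theta> powr e"
  proof -
    have A0: "A \<ge> 0" unfolding A_def using a0 by simp
    have "K \<ge> 0" unfolding K_def B_def using A0 gf(1) pf unfolding l_def by auto
    moreover have "\<xi> powr e \<le> \<theta> powr e" using xs xi e by (intro powr_mono2) auto
    ultimately show ?thesis by (simp add: mult_left_mono)
  qed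
  also have "\<dots> < P \<theta>1" using th by simp
  finally show False using mono[of \<xi>] xs by linarith
qed



lemma tendsto_pi_helper:
  fixes F :: "real \<Rightarrow> real"
  assumes h: "\<And>\<delta>. 0 < \<delta> \<Longrightarrow> \<delta> \<le> pi/2 \<Longrightarrow> eventually (\<lambda>p. pi - \<delta> < F p \<and> F p < pi) at_top"
  shows "(F \<longlongrightarrow> pi) at_top"
proof (rule order_tendstoI)
  fix a assume a: "a < pi"
  define \<delta> where "\<delta> = min ((pi - a)/2) (pi/2)"
  have "\<delta> \<le> (pi - a)/2" unfolding \<delta>_def by (rule min.cobounded1)
  hence d: "0 < \<delta>" "\<delta> \<le> pi/2" "a < pi - \<delta>" using a pi_gt_zero unfolding \<delta>_def by auto
  show "eventually (\<lambda>p. a < F p) at_top" using h[OF d(1,2)] by eventually_elim (use d in auto)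
next
  fix a assume a: "a > pi"
  have "eventually (\<lambda>p. pi - pi/2 < F p \<and> F p < pi) at_top" by (rule h) (use pi_gt_zero in auto)
  thus "eventually (\<lambda>p. F p < a) at_top" by eventually_elim (use a in auto)
qed

theorem theoremD:
  fixes N :: nat and ThetaL ThetaS :: "real \<Rightarrow> real" and Ustar :: "real \<Rightarrow> real \<Rightarrow> real"
  assumes N3: "N \<ge> 3"
    and ThetaL: "\<And>p. p > pS (real N) \<Longrightarrow>
           ThetaL p \<in> {0<..<pi} \<and>
           (\<forall>\<Theta>\<in>{0<..<ThetaL p}. \<not> (\<exists>U. regular_solution (real N) p \<Theta> U)) \<and>
           (\<forall>\<Theta>\<in>{ThetaL p<..<pi}. \<exists>U. regular_solution (real N) p \<Theta> U)"
    and Ustar: "\<And>p. p > pS (real N) \<Longrightarrow> singular_solution (real N) p (Ustar p)"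
    and ThetaS: "\<And>p. p > pS (real N) \<Longrightarrow> first_zero (Ustar p) (ThetaS p)"
  shows "(ThetaL \<longlongrightarrow> pi) at_top \<and> (ThetaS \<longlongrightarrow> pi) at_top \<and>
         (N = 3 \<longrightarrow>
            (\<forall>p\<ge>5. \<forall>\<Theta>\<in>{0<..pi - arcsin (4 / (p - 1))}.
                 \<not> (\<exists>U. regular_solution 3 p \<Theta> U)) \<and>
            (\<forall>p>5. ThetaL p \<ge> pi - arcsin (4 / (p - 1))))"
proof (intro conjI impI)
  have evp: "eventually (\<lambda>p. p > pS (real N) \<and> p > 0 \<and>
      p + 1 > 2 * real N + 2 * (2 / sin \<delta> ^ (N - 2)) * (real N - 1)) at_top" for \<delta>
    by (intro eventually_conj eventually_gt_at_top) (auto simp: eventually_at_top_dense intro: exI[of _ "2 * real N + 2 * (2 / sin \<delta> ^ (N - 2)) * (real N - 1)"])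
  show "(ThetaL \<longlongrightarrow> pi) at_top"
  proof (rule tendsto_pi_helper)
    fix \<delta> :: real assume d: "0 < \<delta>" "\<delta> \<le> pi/2"
    show "eventually (\<lambda>p. pi - \<delta> < ThetaL p \<and> ThetaL p < pi) at_top"
      using evp[of "\<delta>/2"]
    proof eventually_elim
      case (elim p)
      have TL: "ThetaL p \<in> {0<..<pi}" "\<forall>\<Theta>\<in>{ThetaL p<..<pi}. \<exists>U. regular_solution (real N) p \<Theta> U"
        using ThetaL[of p] elim by auto
      have "\<not> ThetaL p < pi - \<delta>/2"
      proof
        assume le: "ThetaL p < pi - \<delta>/2"
        define \<Theta> where "\<Theta> = (ThetaL p + (pi - \<delta>/2)) / 2"
        have Th: "\<Theta> \<in> {ThetaL p<..<pi}" "0 < \<Theta>" "\<Theta> \<le> pi - \<delta>/2" using TL d le unfolding \<Theta>_def by auto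
        then obtain U where "regular_solution (real N) p \<Theta> U" using TL by blast
        moreover have "\<not> regular_solution (real N) p \<Theta> U"
          by (rule genN_nonexist[of N "\<delta>/2"]) (use N3 d elim Th in auto)
        ultimately show False by blast
      qed
      thus ?case using TL d by auto
    qed
  qed
  show "(ThetaS \<longlongrightarrow> pi) at_top"
  proof (rule tendsto_pi_helper)
    fix \<delta> :: real assume d: "0 < \<delta>" "\<delta> \<le> pi/2"
    show "eventually (\<lambda>p. pi - \<delta> < ThetaS p \<and> ThetaS p < pi) at_top"
      using evp[of \<delta>]
    proof eventually_elim
      case (elim p)
      have "ThetaS p > pi - \<delta>"
        by (rule sing_bound[OF N3 d _ _ Ustar ThetaS]) (use elim in auto)
      moreover have "ThetaS p < pi" using ThetaS[of p] elim unfolding first_zero_def by auto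
      ultimately show ?case by auto
    qed
  qed
  assume N: "N = 3"
  show "\<forall>p\<ge>5. \<forall>\<Theta>\<in>{0<..pi - arcsin (4 / (p - 1))}. \<not> (\<exists>U. regular_solution 3 p \<Theta> U)"
    using N3_nonexist by auto
  show "\<forall>p>5. ThetaL p \<ge> pi - arcsin (4 / (p - 1))"
  proof (intro allI impI)
    fix p :: real assume p5: "p > 5"
    have "pS (real N) = 5" unfolding N pS_def by simp
    hence TL: "ThetaL p \<in> {0<..<pi}" "\<forall>\<Theta>\<in>{ThetaL p<..<pi}. \<exists>U. regular_solution 3 p \<Theta> U"
      using ThetaL[of p] p5 N by auto
    define y where "y = 4 / (p - 1)"
    have y: "0 < y" "y \<le> 1" using p5 by (auto simp: y_def field_simps)
    have A: "0 < arcsin y" using arcsin_less_mono[of 0 y] y by simp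
    show "ThetaL p \<ge> pi - arcsin (4 / (p - 1))"
    proof (rule ccontr)
      assume "\<not> ?thesis"
      hence le: "ThetaL p < pi - arcsin y" unfolding y_def by simp
      define \<Theta> where "\<Theta> = (ThetaL p + (pi - arcsin y)) / 2"
      have Th: "\<Theta> \<in> {ThetaL p<..<pi}" "0 < \<Theta>" "\<Theta> \<le> pi - arcsin (4 / (p - 1))"
        using TL A le unfolding \<Theta>_def y_def by auto
      then obtain U where "regular_solution 3 p \<Theta> U" using TL by blast
      moreover have "\<not> regular_solution 3 p \<Theta> U" by (rule N3_nonexist) (use p5 Th in auto)
      ultimately show False by blast
    qed
  qed
qed

end
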